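(* Let $\mathbf{G}$ be a labeled multilayer directed network on $\mathcal{V}=\{v_1,\dots,v_n\}$ with labels $\{C_1,\dots,C_h\}$ and attractiveness values $A_{i,l}$ such that for each $l$ the values $A_{1,l},\dots,A_{n,l}$ are pairwise distinct, and suppose $\mathbf{G}$ is extremal, i.e. $P(\mathbf{G})=\min_{\mathbf{H}\in\mathcal{R}(\mathbf{G})}P(\mathbf{H})$ or $P(\mathbf{G})=\max_{\mathbf{H}\in\mathcal{R}(\mathbf{G})}P(\mathbf{H})$. Let $E\subseteq\mathcal{E}$ be a nonempty edge set with $\Delta(E)=0$. Then there is no label $C_l$ with $C_l\in\mathcal{C}(e)$ for all $e\in E$ (i.e. the edges of $E$ do not share a common label). Equivalently, if all edges of $E$ share a common label, then $\Delta(E)=1$.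
   Context: A labeled multilayer directed network $\mathbf{G}=(\mathcal{V},\mathcal{E})$ is a finite simple directed graph (no self-loops, no multiple edges) on nodes $\mathcal{V}=\{v_1,\dots,v_n\}$ in which each edge $v_i\to v_j\in\mathcal{E}$ carries a nonempty label set $\mathcal{C}(i,j)\subseteq\{C_1,\dots,C_h\}$; an ordered pair $(v_i,v_j)$ is an edge iff $\mathcal{C}(i,j)\neq\emptyset$. The $l$-th layer $\mathbf{G}_l=(\mathcal{V}_l,\mathcal{E}_l)$ consists of all edges with $C_l\in\mathcal{C}(i,j)$ and their endpoints. Each node $v_i$ has, for each $l$, an attractiveness $A_{i,l}\ge 0$; let $A_{\max,l}=\max_i A_{i,l}$. The potential energy of $v_i$ in layer $l$ is $P_l(i)=\sum_{j=1}^n (A_{\max,l}-A_{j,l})\,\chi(v_i\to v_j\in\mathcal{E}_l)$, and $P(\mathbf{G})=\sum_{i=1}^n\sum_{l=1}^h P_l(i)$. A rewiring move replaces, for some layer $l$ and some edge $v_j\to v_k\in\mathcal{E}_l$, the layer-$l$ edge $v_j\to v_k$ by a layer-$l$ edge $v_j\to v_w$ with $w\neq j$ and $v_j\to v_w\notin\mathcal{E}_l$ (i.e. $C_l$ is removed from $\mathcal{C}(j,k)$ and added to $\mathcal{C}(j,w)$; the edge $v_j\to v_k$ disappears if its label set becomes empty, and $v_j\to v_w$ is created if it did not exist). $\mathcal{R}(\mathbf{G})$ is the set of all labeled multilayer networks (same nodes, same attractiveness values) obtainable from $\mathbf{G}$ by finite sequences of rewiring moves (including $\mathbf{G}$). For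 an edge set $F$, $\lceil F\rceil_{src}$ (resp. $\lceil F\rceil_{tar}$) is the set of source (resp. target) nodes of edges of $F$. A node $u$ is a $(2,\mathbf{G})$-follower of $v$ if the directed shortest-path distance from $u$ to $v$ in $\mathbf{G}$ (ignoring labels) equals exactly $2$. The removal procedure on $E$: set $F:=E$; while there exists a node $v\in\lceil F\rceil_{tar}$ having no $(2,\mathbf{G})$-follower in $\lceil F\rceil_{src}$, choose one such $v$ and remove from $F$ all edges of $F$ whose target is $v$; when no such node exists (or $F=\emptyset$), stop and set $\delta(E):=F$ (this is independent of the choices made). $\Delta(E)=1$ if $\delta(E)=\emptyset$, and $\Delta(E)=0$ otherwise. *)

theory Defs
  imports Complex_Main
begin

text \<open>A labeled multilayer directed network on nodes 0..<n with labels 0..<h is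
  represented by its label-set function C :: nat \<Rightarrow> nat \<Rightarrow> nat set, where C i j is the
  label set of the ordered pair (i,j); (i,j) is an edge iff C i j \<noteq> {}.\<close>

definition wf_net :: "nat \<Rightarrow> nat \<Rightarrow> (nat \<Rightarrow> nat \<Rightarrow> nat set) \<Rightarrow> bool" where
  "wf_net n h C \<longleftrightarrow>
     (\<forall>i j. C i j \<subseteq> {0..<h}) \<and> (\<forall>i. C i i = {}) \<and>
     (\<forall>i j. C i j \<noteq> {} \<longrightarrow> i < n \<and> j < n)"

definition is_edge :: "(nat \<Rightarrow> nat \<Rightarrow> nat set) \<Rightarrow> nat \<Rightarrow> nat \<Rightarrow> bool" where
  "is_edge C i j \<longleftrightarrow> C i j \<noteq> {}"

definition Amax :: "nat \<Rightarrow> (nat \<Rightarrow> nat \<Rightarrow> real) \<Rightarrow> nat \<Rightarrow> real" where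
  "Amax n A l = Max {A j l | j. j < n}"

definition potential_layer :: "nat \<Rightarrow> (nat \<Rightarrow> nat \<Rightarrow> real) \<Rightarrow> (nat \<Rightarrow> nat \<Rightarrow> nat set) \<Rightarrow> nat \<Rightarrow> nat \<Rightarrow> real" where
  "potential_layer n A C l i = (\<Sum>j<n. (Amax n A l - A j l) * (if l \<in> C i j then 1 else 0))"

definition potential :: "nat \<Rightarrow> nat \<Rightarrow> (nat \<Rightarrow> nat \<Rightarrow> real) \<Rightarrow> (nat \<Rightarrow> nat \<Rightarrow> nat set) \<Rightarrow> real" where
  "potential n h A C = (\<Sum>i<n. \<Sum>l<h. potential_layer n A C l i)"

definition rewire :: "nat \<Rightarrow> (nat \<Rightarrow> nat \<Rightarrow> nat set) \<Rightarrow> (nat \<Rightarrow> nat \<Rightarrow> nat set) \<Rightarrow> bool" where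
  "rewire n C C' \<longleftrightarrow> (\<exists>l j k w. l \<in> C j k \<and> w < n \<and> w \<noteq> j \<and> l \<notin> C j w \<and>
      C' = C(j := (C j)(k := C j k - {l}, w := C j w \<union> {l})))"

definition rewirings :: "nat \<Rightarrow> (nat \<Rightarrow> nat \<Rightarrow> nat set) \<Rightarrow> (nat \<Rightarrow> nat \<Rightarrow> nat set) set" where
  "rewirings n C = {C'. (rewire n)\<^sup>*\<^sup>* C C'}"

definition extremal :: "nat \<Rightarrow> nat \<Rightarrow> (nat \<Rightarrow> nat \<Rightarrow> real) \<Rightarrow> (nat \<Rightarrow> nat \<Rightarrow> nat set) \<Rightarrow> bool" where
  "extremal n h A C \<longleftrightarrow>
     (\<forall>H \<in> rewirings n C. potential n h A C \<le> potential n h A H) \<or>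
     (\<forall>H \<in> rewirings n C. potential n h A H \<le> potential n h A C)"

definition dist_eq :: "(nat \<Rightarrow> nat \<Rightarrow> nat set) \<Rightarrow> nat \<Rightarrow> nat \<Rightarrow> nat \<Rightarrow> bool" where
  "dist_eq C u v d \<longleftrightarrow> ((is_edge C) ^^ d) u v \<and> (\<forall>m<d. \<not> ((is_edge C) ^^ m) u v)"

definition follower2 :: "(nat \<Rightarrow> nat \<Rightarrow> nat set) \<Rightarrow> nat \<Rightarrow> nat \<Rightarrow> bool" where
  "follower2 C u v \<longleftrightarrow> dist_eq C u v 2"

definition src :: "(nat \<times> nat) set \<Rightarrow> nat set" where
  "src F = fst ` F"

definition tar :: "(nat \<times> nat) set \<Rightarrow> nat set" where
  "tar F = snd ` F"

definition removable :: "(nat \<Rightarrow> nat \<Rightarrow> nat set) \<Rightarrow> (nat \<times> nat) set \<Rightarrow> nat \<Rightarrow> bool" where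
  "removable C F v \<longleftrightarrow> v \<in> tar F \<and> \<not> (\<exists>u \<in> src F. follower2 C u v)"

definition removal_step :: "(nat \<Rightarrow> nat \<Rightarrow> nat set) \<Rightarrow> (nat \<times> nat) set \<Rightarrow> (nat \<times> nat) set \<Rightarrow> bool" where
  "removal_step C F F' \<longleftrightarrow> (\<exists>v. removable C F v \<and> F' = {e \<in> F. snd e \<noteq> v})"

definition removal_result :: "(nat \<Rightarrow> nat \<Rightarrow> nat set) \<Rightarrow> (nat \<times> nat) set \<Rightarrow> (nat \<times> nat) set \<Rightarrow> bool" where
  "removal_result C E F \<longleftrightarrow> (removal_step C)\<^sup>*\<^sup>* E F \<and> \<not> (\<exists>v. removable C F v)"

text \<open>The outcome of the removal procedure (independent of choices, as stated in the paper).\<close>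
definition delta :: "(nat \<Rightarrow> nat \<Rightarrow> nat set) \<Rightarrow> (nat \<times> nat) set \<Rightarrow> (nat \<times> nat) set" where
  "delta C E = (THE F. removal_result C E F)"

definition Delta :: "(nat \<Rightarrow> nat \<Rightarrow> nat set) \<Rightarrow> (nat \<times> nat) set \<Rightarrow> nat" where
  "Delta C E = (if delta C E = {} then 1 else 0)"

end

theory Submission
  imports Defs
begin

lemma sum_diff_two:
  fixes f g :: "nat \<Rightarrow> real"
  assumes "v < n" "t < n" "t \<noteq> v"
    and "\<forall>j. j \<noteq> v \<and> j \<noteq> t \<longrightarrow> f j = g j"
  shows "(\<Sum>j<n. f j) = (\<Sum>j<n. g j) + (f v - g v) + (f t - g t)"
proof -
  have "(\<Sum>j<n. f j) - (\<Sum>j<n. g j) = (\<Sum>j<n. f j - g j)"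
    by (simp add: sum_subtractf)
  also have "\<dots> = (\<Sum>j<n. (if j = v then f v - g v else 0) + (if j = t then f t - g t else 0))"
    by (rule sum.cong) (use assms in auto)
  also have "\<dots> = (f v - g v) + (f t - g t)"
    using assms by (simp add: sum.distrib)
  finally show ?thesis by simp
qed

lemma sum_diff_one:
  fixes f g :: "nat \<Rightarrow> real"
  assumes "u < n" "\<forall>j. j \<noteq> u \<longrightarrow> f j = g j"
  shows "(\<Sum>j<n. f j) = (\<Sum>j<n. g j) + (f u - g u)"
proof -
  have "(\<Sum>j<n. f j) - (\<Sum>j<n. g j) = (\<Sum>j<n. f j - g j)"
    by (simp add: sum_subtractf)
  also have "\<dots> = (\<Sum>j<n. (if j = u then f u - g u else 0))"
    by (rule sum.cong) (use assms in auto)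
  also have "\<dots> = (f u - g u)"
    using assms by simp
  finally show ?thesis by simp
qed

lemma potential_rewire:
  assumes wf: "wf_net n h C" and lt: "l \<in> C u t" and vn: "v < n" and vu: "v \<noteq> u"
    and lv: "l \<notin> C u v"
  shows "potential n h A (C(u := (C u)(t := C u t - {l}, v := C u v \<union> {l})))
       = potential n h A C + A t l - A v l"
proof -
  define C' where "C' = C(u := (C u)(t := C u t - {l}, v := C u v \<union> {l}))"
  have "C u t \<noteq> {}" using lt by auto
  then have un: "u < n" and tn: "t < n" using wf unfolding wf_net_def by auto
  have "C u t \<subseteq> {0..<h}" using wf unfolding wf_net_def by blast
  then have lh: "l < h" using lt by auto
  have tv: "t \<noteq> v" using lt lv by auto
  have same: "l' \<in> C' i j \<longleftrightarrow> l' \<in> C i j" if "l' \<noteq> l \<or> i \<noteq> u" for l' i j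
    using that unfolding C'_def by auto
  have pl_same: "potential_layer n A C' l' i = potential_layer n A C l' i" if "l' \<noteq> l \<or> i \<noteq> u" for l' i
    unfolding potential_layer_def using same[OF that] by simp
  have inner: "potential_layer n A C' l u = potential_layer n A C l u + (A t l - A v l)"
  proof -
    let ?f = "\<lambda>j. (Amax n A l - A j l) * (if l \<in> C' u j then 1 else 0)"
    let ?g = "\<lambda>j. (Amax n A l - A j l) * (if l \<in> C u j then 1 else 0)"
    have "sum ?f {..<n} = sum ?g {..<n} + (?f v - ?g v) + (?f t - ?g t)"
      by (rule sum_diff_two[OF vn tn tv]) (auto simp: C'_def)
    moreover have "?f v - ?g v = Amax n A l - A v l" "?f t - ?g t = -(Amax n A l - A t l)"
      using tv lv lt by (auto simp: C'_def)
    ultimately show ?thesis unfolding potential_layer_def by simp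
  qed
  have l2: "(\<Sum>l'<h. potential_layer n A C' l' u) = (\<Sum>l'<h. potential_layer n A C l' u) + (A t l - A v l)"
    using sum_diff_one[OF lh, of "\<lambda>l'. potential_layer n A C' l' u" "\<lambda>l'. potential_layer n A C l' u"]
      pl_same inner by auto
  have "potential n h A C' = potential n h A C + (A t l - A v l)"
    unfolding potential_def
    using sum_diff_one[OF un, of "\<lambda>i. \<Sum>l'<h. potential_layer n A C' l' i" "\<lambda>i. \<Sum>l'<h. potential_layer n A C l' i"]
      pl_same l2 by auto
  then show ?thesis unfolding C'_def by simp
qed

lemma rewire_in:
  assumes "l \<in> C u t" "v < n" "v \<noteq> u" "l \<notin> C u v"
  shows "C(u := (C u)(t := C u t - {l}, v := C u v \<union> {l})) \<in> rewirings n C"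
  unfolding rewirings_def
proof (intro CollectI r_into_rtranclp)
  show "rewire n C (C(u := (C u)(t := C u t - {l}, v := C u v \<union> {l})))"
    unfolding rewire_def using assms by blast
qed

lemma ordered:
  assumes wf: "wf_net n h C" and extr: "extremal n h A C"
  shows "(\<forall>l u t v. l \<in> C u t \<longrightarrow> v < n \<longrightarrow> v \<noteq> u \<longrightarrow> l \<notin> C u v \<longrightarrow> A v l \<le> A t l) \<or>
         (\<forall>l u t v. l \<in> C u t \<longrightarrow> v < n \<longrightarrow> v \<noteq> u \<longrightarrow> l \<notin> C u v \<longrightarrow> A t l \<le> A v l)"
  using extr unfolding extremal_def
proof
  assume m: "\<forall>H\<in>rewirings n C. potential n h A C \<le> potential n h A H"
  show ?thesis
  proof (rule disjI1, intro allI impI)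
    fix l u t v assume "l \<in> C u t" "v < n" "v \<noteq> u" "l \<notin> C u v"
    from m[rule_format, OF rewire_in[of l C u t v n, OF this]] potential_rewire[OF wf this, of A]
    show "A v l \<le> A t l" by simp
  qed
next
  assume m: "\<forall>H\<in>rewirings n C. potential n h A H \<le> potential n h A C"
  show ?thesis
  proof (rule disjI2, intro allI impI)
    fix l u t v assume "l \<in> C u t" "v < n" "v \<noteq> u" "l \<notin> C u v"
    from m[rule_format, OF rewire_in[of l C u t v n, OF this]] potential_rewire[OF wf this, of A]
    show "A t l \<le> A v l" by simp
  qed
qed

lemma follower2_D:
  assumes "follower2 C u v" shows "u \<noteq> v" "C u v = {}"
proof -
  have h: "\<forall>m<2. \<not> ((is_edge C) ^^ m) u v"
    using assms unfolding follower2_def dist_eq_def by blast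
  have a: "\<not> ((is_edge C) ^^ 0) u v" "\<not> ((is_edge C) ^^ 1) u v"
    using h[rule_format, of 0] h[rule_format, of 1] by simp_all
  have "\<not> is_edge C u v" using a(2) unfolding relpowp_1 .
  then show "C u v = {}" by (auto simp: is_edge_def)
  show "u \<noteq> v" using a(1) by simp
qed

theorem theorem1:
  fixes n h :: nat and A :: "nat \<Rightarrow> nat \<Rightarrow> real" and C :: "nat \<Rightarrow> nat \<Rightarrow> nat set"
    and E :: "(nat \<times> nat) set"
  assumes net: "wf_net n h C"
    and nonneg: "\<forall>i l. A i l \<ge> 0"
    and distinct: "\<forall>l < h. inj_on (\<lambda>i. A i l) {0..<n}"
    and extr: "extremal n h A C"
    and E_sub: "\<forall>(i, j) \<in> E. is_edge C i j"
    and E_ne: "E \<noteq> {}"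
    and D0: "Delta C E = 0"
  shows "\<not> (\<exists>l. \<forall>(i, j) \<in> E. l \<in> C i j)"
proof
  assume "\<exists>l. \<forall>(i, j) \<in> E. l \<in> C i j"
  then obtain l where lE: "\<forall>(i, j) \<in> E. l \<in> C i j" by blast
  have Ebound: "E \<subseteq> {..<n} \<times> {..<n}"
  proof
    fix x assume "x \<in> E"
    obtain a b where x0: "x = (a, b)" by (cases x)
    then have x: "x = (a, b)" "C a b \<noteq> {}" using E_sub \<open>x \<in> E\<close> unfolding is_edge_def by auto
    then show "x \<in> {..<n} \<times> {..<n}" using net unfolding wf_net_def by auto
  qed
  have finE: "finite E" by (rule finite_subset[OF Ebound]) auto
  from E_ne obtain a b where "(a, b) \<in> E" by auto
  then have "l \<in> C a b" using lE by auto
  moreover have "C a b \<subseteq> {0..<h}" using net unfolding wf_net_def by blast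
  ultimately have lh: "l < h" by auto
  have key: "\<exists>v. removable C F v" if FE: "F \<subseteq> E" and Fne: "F \<noteq> {}" for F
  proof -
    have finT: "finite (tar F)" using finite_subset[OF FE finE] unfolding tar_def by simp
    have neT: "tar F \<noteq> {}" using Fne unfolding tar_def by simp
    have inF: "l \<in> C u t" "u < n" "t < n" if "(u, t) \<in> F" for u t
      using that FE lE Ebound by auto
    have noedge: "False" if fol: "follower2 C u v" and uF: "(u, t) \<in> F" and vT: "v \<in> tar F"
      and ord: "A v l \<le> A t l \<and> A t l \<le> A v l" for u t v
    proof -
      from vT obtain w where "(w, v) \<in> F" unfolding tar_def by auto
      then have vn: "v < n" using inF by auto
      have tn: "t < n" using inF uF by auto
      have "A v l = A t l" using ord by simp
      with distinct lh vn tn have "v = t" unfolding inj_on_def by auto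
      with follower2_D[OF fol] inF(1)[OF uF] show False by auto
    qed
    from ordered[OF net extr] show ?thesis
    proof
      assume o: "\<forall>l u t v. l \<in> C u t \<longrightarrow> v < n \<longrightarrow> v \<noteq> u \<longrightarrow> l \<notin> C u v \<longrightarrow> A v l \<le> A t l"
      let ?M = "Max ((\<lambda>x. A x l) ` tar F)"
      have "?M \<in> (\<lambda>x. A x l) ` tar F" using finT neT by simp
      then obtain v where vT: "v \<in> tar F" and vM: "A v l = ?M" by auto
      have vmax: "A x l \<le> A v l" if "x \<in> tar F" for x using finT that vM by simp
      have "removable C F v"
        unfolding removable_def
      proof (intro conjI vT notI)
        assume "\<exists>u\<in>src F. follower2 C u v"
        then obtain u where uS: "u \<in> src F" and fol: "follower2 C u v" by auto
        from uS obtain t where uF: "(u, t) \<in> F" unfolding src_def by force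
        from vT obtain w where "(w, v) \<in> F" unfolding tar_def by auto
        then have vn: "v < n" using inF by auto
        have "A v l \<le> A t l" using o inF(1)[OF uF] vn follower2_D[OF fol] by auto
        moreover have "A t l \<le> A v l" using vmax uF unfolding tar_def by force
        ultimately show False using noedge[OF fol uF vT] by auto
      qed
      then show ?thesis by blast
    next
      assume o: "\<forall>l u t v. l \<in> C u t \<longrightarrow> v < n \<longrightarrow> v \<noteq> u \<longrightarrow> l \<notin> C u v \<longrightarrow> A t l \<le> A v l"
      let ?M = "Min ((\<lambda>x. A x l) ` tar F)"
      have "?M \<in> (\<lambda>x. A x l) ` tar F" using finT neT by simp
      then obtain v where vT: "v \<in> tar F" and vM: "A v l = ?M" by auto
      have vmin: "A v l \<le> A x l" if "x \<in> tar F" for x using finT that vM by simp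
      have "removable C F v"
        unfolding removable_def
      proof (intro conjI vT notI)
        assume "\<exists>u\<in>src F. follower2 C u v"
        then obtain u where uS: "u \<in> src F" and fol: "follower2 C u v" by auto
        from uS obtain t where uF: "(u, t) \<in> F" unfolding src_def by force
        from vT obtain w where "(w, v) \<in> F" unfolding tar_def by auto
        then have vn: "v < n" using inF by auto
        have "A t l \<le> A v l" using o inF(1)[OF uF] vn follower2_D[OF fol] by auto
        moreover have "A v l \<le> A t l" using vmin uF unfolding tar_def by force
        ultimately show False using noedge[OF fol uF vT] by auto
      qed
      then show ?thesis by blast
    qed
  qed
  have reach: "F \<subseteq> E \<Longrightarrow> (removal_step C)\<^sup>*\<^sup>* F {}" for F
  proof (induction "card F" arbitrary: F rule: less_induct)
    case less
    show ?case
    proof (cases "F = {}")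
      case True then show ?thesis by simp
    next
      case False
      from key[OF less.prems False] obtain v where rv: "removable C F v" by blast
      define F' where "F' = {e \<in> F. snd e \<noteq> v}"
      have st: "removal_step C F F'" unfolding removal_step_def F'_def using rv by blast
      have finF: "finite F" using finite_subset[OF less.prems finE] .
      from rv obtain e where "e \<in> F" "snd e = v" unfolding removable_def tar_def by auto
      then have "F' \<subset> F" unfolding F'_def by auto
      then have "card F' < card F" using finF by (simp add: psubset_card_mono)
      moreover have "F' \<subseteq> E" using less.prems unfolding F'_def by auto
      ultimately have "(removal_step C)\<^sup>*\<^sup>* F' {}" using less.hyps by blast
      with st show ?thesis by (rule converse_rtranclp_into_rtranclp)
    qed
  qed
  have sub: "(removal_step C)\<^sup>*\<^sup>* E F \<Longrightarrow> F \<subseteq> E" for F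
    by (induction rule: rtranclp_induct) (auto simp: removal_step_def)
  have rr0: "removal_result C E {}"
    unfolding removal_result_def removable_def tar_def using reach by auto
  have uniq: "F = {}" if "removal_result C E F" for F
    using that key sub unfolding removal_result_def by blast
  have "delta C E = {}" unfolding delta_def
    using rr0 uniq by (rule the_equality)
  then show False using D0 unfolding Delta_def by simp
qed

end
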